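(* Let $\varepsilon\in\{0,\tfrac12\}$. Every commutative post-Lie algebra structure on the Schrödinger–Virasoro Lie algebra $\mathcal{SV}(\varepsilon)$ is trivial: if $\cdot$ is a commutative post-Lie algebra structure on $\mathcal{SV}(\varepsilon)$, then $x\cdot y=0$ for all $x,y\in\mathcal{SV}(\varepsilon)$.
   Context: For $\varepsilon\in\{0,\frac12\}$, $\mathcal{SV}(\varepsilon)$ is the complex Lie algebra with basis $\{L_i,Y_j,M_i\mid i\in\mathbb{Z},\ j\in\varepsilon+\mathbb{Z}\}$ and brackets $[L_m,L_n]=(m-n)L_{m+n}$, $[L_m,Y_n]=(\frac12 m-n)Y_{m+n}$, $[L_m,M_n]=-nM_{m+n}$, $[Y_m,Y_n]=(m-n)M_{m+n}$, $[Y_m,M_n]=[M_m,M_n]=0$. A commutative post-Lie algebra structure on a complex Lie algebra $(L,[\,,])$ is a $\mathbb{C}$-bilinear product $x\cdot y$ on $L$ such that for all $x,y,z\in L$: $x\cdot y=y\cdot x$; $[x,y]\cdot z=x\cdot(y\cdot z)-y\cdot(x\cdot z)$; and $x\cdot[y,z]=[x\cdot y,z]+[y,x\cdot z]$. *)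

theory Defs
  imports Complex_Main
begin

text \<open>Basis of the Schroedinger-Virasoro algebra SV(eps): L_i (i integer),
  Y_j (j real, required to lie in eps + Z), M_i (i integer).\<close>
datatype sv_idx = L int | Y real | M int

text \<open>Structure constants: coefficient of basis vector k in [a,b].\<close>
fun sv_const :: "sv_idx \<Rightarrow> sv_idx \<Rightarrow> sv_idx \<Rightarrow> complex" where
  "sv_const (L m) (L n) k = (if k = L (m + n) then of_int (m - n) else 0)"
| "sv_const (L m) (Y n) k = (if k = Y (of_int m + n) then complex_of_real (of_int m / 2 - n) else 0)"
| "sv_const (Y n) (L m) k = (if k = Y (of_int m + n) then - complex_of_real (of_int m / 2 - n) else 0)"
| "sv_const (L m) (M n) k = (if k = M (m + n) then - of_int n else 0)"
| "sv_const (M n) (L m) k = (if k = M (m + n) then of_int n else 0)"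
| "sv_const (Y m) (Y n) k =
     (case k of M i \<Rightarrow> if of_int i = m + n then complex_of_real (m - n) else 0 | _ \<Rightarrow> 0)"
| "sv_const _ _ _ = 0"

definition SV :: "real \<Rightarrow> (sv_idx \<Rightarrow> complex) set" where
  "SV eps = {f. finite {i. f i \<noteq> 0} \<and> (\<forall>j. f (Y j) \<noteq> 0 \<longrightarrow> j - eps \<in> \<int>)}"

definition sv_bracket :: "(sv_idx \<Rightarrow> complex) \<Rightarrow> (sv_idx \<Rightarrow> complex) \<Rightarrow> (sv_idx \<Rightarrow> complex)" where
  "sv_bracket f g = (\<lambda>k. \<Sum>a\<in>{a. f a \<noteq> 0}. \<Sum>b\<in>{b. g b \<noteq> 0}. f a * g b * sv_const a b k)"

definition comm_post_lie_SV ::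
  "real \<Rightarrow> ((sv_idx \<Rightarrow> complex) \<Rightarrow> (sv_idx \<Rightarrow> complex) \<Rightarrow> (sv_idx \<Rightarrow> complex)) \<Rightarrow> bool" where
  "comm_post_lie_SV eps p \<longleftrightarrow>
     (\<forall>x\<in>SV eps. \<forall>y\<in>SV eps. p x y \<in> SV eps) \<and>
     (\<forall>x\<in>SV eps. \<forall>y\<in>SV eps. \<forall>z\<in>SV eps. p (\<lambda>i. x i + y i) z = (\<lambda>i. p x z i + p y z i)) \<and>
     (\<forall>x\<in>SV eps. \<forall>y\<in>SV eps. \<forall>z\<in>SV eps. p x (\<lambda>i. y i + z i) = (\<lambda>i. p x y i + p x z i)) \<and>
     (\<forall>c::complex. \<forall>x\<in>SV eps. \<forall>y\<in>SV eps. p (\<lambda>i. c * x i) y = (\<lambda>i. c * p x y i)) \<and>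
     (\<forall>c::complex. \<forall>x\<in>SV eps. \<forall>y\<in>SV eps. p x (\<lambda>i. c * y i) = (\<lambda>i. c * p x y i)) \<and>
     (\<forall>x\<in>SV eps. \<forall>y\<in>SV eps. p x y = p y x) \<and>
     (\<forall>x\<in>SV eps. \<forall>y\<in>SV eps. \<forall>z\<in>SV eps.
        p (sv_bracket x y) z = (\<lambda>i. p x (p y z) i - p y (p x z) i)) \<and>
     (\<forall>x\<in>SV eps. \<forall>y\<in>SV eps. \<forall>z\<in>SV eps.
        p x (sv_bracket y z) = (\<lambda>i. sv_bracket (p x y) z i + sv_bracket y (p x z) i))"

end

theory Submission
  imports Defs
begin


definition bv :: "sv_idx \<Rightarrow> sv_idx \<Rightarrow> complex" where
  "bv a = (\<lambda>k. if k = a then 1 else 0)"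

fun valid :: "real \<Rightarrow> sv_idx \<Rightarrow> bool" where
  "valid e (L n) = True"
| "valid e (Y j) = (j - e \<in> \<int>)"
| "valid e (M n) = True"

fun deg :: "sv_idx \<Rightarrow> real" where
  "deg (L n) = of_int n"
| "deg (Y j) = j"
| "deg (M n) = of_int n"

lemma bv_SV: "valid eps a \<Longrightarrow> bv a \<in> SV eps"
  unfolding SV_def bv_def by (cases a) auto

lemma SV_fin: "g \<in> SV eps \<Longrightarrow> finite {i. g i \<noteq> 0}"
  unfolding SV_def by auto

lemma SV_Y: "g \<in> SV eps \<Longrightarrow> g (Y j) \<noteq> 0 \<Longrightarrow> j - eps \<in> \<int>"
  unfolding SV_def by auto

lemma br_left: "sv_bracket (bv c) g k = (\<Sum>b\<in>{b. g b \<noteq> 0}. g b * sv_const c b k)"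
proof -
  have "{a. bv c a \<noteq> 0} = {c}" by (auto simp: bv_def)
  then show ?thesis unfolding sv_bracket_def by (simp add: bv_def)
qed

lemma collapse:
  fixes g h :: "sv_idx \<Rightarrow> complex"
  assumes "finite {b. g b \<noteq> 0}" "\<And>b. b \<noteq> bz \<Longrightarrow> h b = 0"
  shows "(\<Sum>b\<in>{b. g b \<noteq> 0}. g b * h b) = g bz * h bz"
proof -
  have "(\<Sum>b\<in>{b. g b \<noteq> 0}. g b * h b) = (\<Sum>b\<in>{b. g b \<noteq> 0}. if b = bz then g bz * h bz else 0)"
  proof (rule sum.cong)
    fix b assume "b \<in> {b. g b \<noteq> 0}"
    show "g b * h b = (if b = bz then g bz * h bz else 0)"
      by (cases "b = bz") (simp_all add: assms(2))
  qed simp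
  also have "\<dots> = (if bz \<in> {b. g b \<noteq> 0} then g bz * h bz else 0)"
    using assms(1) by (simp add: sum.delta)
  also have "\<dots> = g bz * h bz" by auto
  finally show ?thesis .
qed

lemma ev_LL: "finite {b. g b \<noteq> 0} \<Longrightarrow> sv_bracket (bv (L m)) g (L s) = g (L (s - m)) * of_int (2*m - s)"
  unfolding br_left
  apply (subst collapse[where bz="L (s - m)"])
    apply simp
   apply (rename_tac b, case_tac b; auto)
  apply simp
  done

lemma ev_LY: "finite {b. g b \<noteq> 0} \<Longrightarrow> sv_bracket (bv (L m)) g (Y s)
   = g (Y (s - of_int m)) * complex_of_real (of_int m / 2 - (s - of_int m))"
  unfolding br_left
  apply (subst collapse[where bz="Y (s - of_int m)"])
    apply simp
   apply (rename_tac b, case_tac b; auto)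
  apply simp
  done

lemma ev_LM: "finite {b. g b \<noteq> 0} \<Longrightarrow> sv_bracket (bv (L m)) g (M s) = g (M (s - m)) * (- of_int (s - m))"
  unfolding br_left
  apply (subst collapse[where bz="M (s - m)"])
    apply simp
   apply (rename_tac b, case_tac b; auto)
  apply simp
  done

lemma ev_YL: "sv_bracket (bv (Y j)) g (L s) = 0"
  unfolding br_left
  apply (rule sum.neutral)
  apply (rule ballI, rename_tac b, case_tac b; simp)
  done




lemma ev_Y_noL: "(\<forall>i. g (L i) = 0) \<Longrightarrow> sv_bracket (bv (Y j)) g (Y s) = 0"
  unfolding br_left
  apply (rule sum.neutral)
  apply (rule ballI, rename_tac b, case_tac b; simp)
  done

lemma ev_Y_onlyM: "(\<forall>i. g (L i) = 0) \<Longrightarrow> (\<forall>i. g (Y i) = 0) \<Longrightarrow> sv_bracket (bv (Y j)) g k = 0"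
  unfolding br_left
  apply (rule sum.neutral)
  apply (rule ballI, rename_tac b, case_tac b; simp)
  done

lemma sv_const_anti: "sv_const a b k = - sv_const b a k"
  by (cases a; cases b; cases k; auto simp: ac_simps)

lemma br_anti: "sv_bracket f g k = - sv_bracket g f k"
proof -
  have "sv_bracket f g k = (\<Sum>a\<in>{a. f a \<noteq> 0}. \<Sum>b\<in>{b. g b \<noteq> 0}. f a * g b * sv_const a b k)"
    by (simp add: sv_bracket_def)
  also have "\<dots> = (\<Sum>b\<in>{b. g b \<noteq> 0}. \<Sum>a\<in>{a. f a \<noteq> 0}. f a * g b * sv_const a b k)"
    by (rule sum.swap)
  also have "\<dots> = (\<Sum>b\<in>{b. g b \<noteq> 0}. \<Sum>a\<in>{a. f a \<noteq> 0}. - (g b * f a * sv_const b a k))"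
    by (subst sv_const_anti) (simp add: ac_simps)
  also have "\<dots> = - sv_bracket g f k"
    by (simp add: sv_bracket_def sum_negf)
  finally show ?thesis .
qed

lemma br_bv: "sv_bracket (bv a) (bv b) = (\<lambda>k. sv_const a b k)"
proof -
  have "{x. bv b x \<noteq> 0} = {b}" by (auto simp: bv_def)
  then show ?thesis by (simp add: fun_eq_iff br_left) (simp add: bv_def)
qed

lemma bLL: "sv_bracket (bv (L m)) (bv (L n)) = (\<lambda>k. of_int (m-n) * bv (L (m+n)) k)"
  unfolding br_bv by (auto simp: bv_def)

lemma bLY: "sv_bracket (bv (L m)) (bv (Y n)) = (\<lambda>k. complex_of_real (of_int m/2 - n) * bv (Y (of_int m + n)) k)"
  unfolding br_bv by (auto simp: bv_def)

lemma bLM: "sv_bracket (bv (L m)) (bv (M n)) = (\<lambda>k. - of_int n * bv (M (m+n)) k)"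
  unfolding br_bv by (auto simp: bv_def)

lemma bYY: "of_int i = m + n \<Longrightarrow> sv_bracket (bv (Y m)) (bv (Y n)) = (\<lambda>k. complex_of_real (m - n) * bv (M i) k)"
  unfolding br_bv by (auto simp: bv_def fun_eq_iff split: sv_idx.split)

lemma bL0: "sv_bracket (bv (L 0)) (bv f) = (\<lambda>k. - complex_of_real (deg f) * bv f k)"
  by (cases f) (auto simp: bLL bLY bLM)

lemma L0q: "finite {b. q b \<noteq> 0} \<Longrightarrow> sv_bracket (bv (L 0)) q k = - complex_of_real (deg k) * q k"
  by (cases k) (auto simp: ev_LL ev_LY ev_LM)




locale cpa =
  fixes eps :: real and p :: "(sv_idx \<Rightarrow> complex) \<Rightarrow> (sv_idx \<Rightarrow> complex) \<Rightarrow> (sv_idx \<Rightarrow> complex)"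
  assumes eps: "eps = 0 \<or> eps = 1/2"
    and cpl: "comm_post_lie_SV eps p"
begin

lemmas ax = cpl[unfolded comm_post_lie_SV_def]

lemma closed: "x \<in> SV eps \<Longrightarrow> y \<in> SV eps \<Longrightarrow> p x y \<in> SV eps"
  using ax[THEN conjunct1] by blast
lemma addR: "x \<in> SV eps \<Longrightarrow> y \<in> SV eps \<Longrightarrow> z \<in> SV eps \<Longrightarrow> p x (\<lambda>i. y i + z i) = (\<lambda>i. p x y i + p x z i)"
  using ax[THEN conjunct2[THEN conjunct2, THEN conjunct1]] by blast
lemma homL: "x \<in> SV eps \<Longrightarrow> y \<in> SV eps \<Longrightarrow> p (\<lambda>i. c * x i) y = (\<lambda>i. c * p x y i)"
  using ax[THEN conjunct2[THEN conjunct2, THEN conjunct2, THEN conjunct1]] by blast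
lemma homR: "x \<in> SV eps \<Longrightarrow> y \<in> SV eps \<Longrightarrow> p x (\<lambda>i. c * y i) = (\<lambda>i. c * p x y i)"
  using ax[THEN conjunct2[THEN conjunct2, THEN conjunct2, THEN conjunct2, THEN conjunct1]] by blast
lemma comm: "x \<in> SV eps \<Longrightarrow> y \<in> SV eps \<Longrightarrow> p x y = p y x"
  using ax[THEN conjunct2[THEN conjunct2, THEN conjunct2, THEN conjunct2, THEN conjunct2, THEN conjunct1]] by blast
lemma Hm: "x \<in> SV eps \<Longrightarrow> y \<in> SV eps \<Longrightarrow> z \<in> SV eps \<Longrightarrow>
   p (sv_bracket x y) z = (\<lambda>i. p x (p y z) i - p y (p x z) i)"
  using ax[THEN conjunct2[THEN conjunct2, THEN conjunct2, THEN conjunct2, THEN conjunct2, THEN conjunct2, THEN conjunct1]] by blast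
lemma Dr: "x \<in> SV eps \<Longrightarrow> y \<in> SV eps \<Longrightarrow> z \<in> SV eps \<Longrightarrow>
   p x (sv_bracket y z) = (\<lambda>i. sv_bracket (p x y) z i + sv_bracket y (p x z) i)"
  using ax[THEN conjunct2[THEN conjunct2, THEN conjunct2, THEN conjunct2, THEN conjunct2, THEN conjunct2, THEN conjunct2]] by blast

lemma bvL[simp]: "bv (L n) \<in> SV eps" by (rule bv_SV) simp
lemma bvM[simp]: "bv (M n) \<in> SV eps" by (rule bv_SV) simp

lemma Pfin: "x \<in> SV eps \<Longrightarrow> y \<in> SV eps \<Longrightarrow> finite {i. p x y i \<noteq> 0}"
  using closed SV_fin by blast

lemma G:
  assumes x: "x \<in> SV eps" and f: "valid eps f"
  shows "complex_of_real (deg f - deg k) * p x (bv f) k = sv_bracket (bv f) (p x (bv (L 0))) k"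
proof -
  have bf: "bv f \<in> SV eps" using f by (rule bv_SV)
  have "p x (sv_bracket (bv (L 0)) (bv f)) = (\<lambda>i. sv_bracket (p x (bv (L 0))) (bv f) i + sv_bracket (bv (L 0)) (p x (bv f)) i)"
    using Dr[OF x bvL bf] .
  moreover have "p x (sv_bracket (bv (L 0)) (bv f)) = (\<lambda>i. - complex_of_real (deg f) * p x (bv f) i)"
    unfolding bL0 using homR[OF x bf, of "- complex_of_real (deg f)"] by simp
  ultimately have "- complex_of_real (deg f) * p x (bv f) k
     = sv_bracket (p x (bv (L 0))) (bv f) k + sv_bracket (bv (L 0)) (p x (bv f)) k"
    by metis
  also have "sv_bracket (p x (bv (L 0))) (bv f) k = - sv_bracket (bv f) (p x (bv (L 0))) k"
    by (rule br_anti)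
  also have "sv_bracket (bv (L 0)) (p x (bv f)) k = - complex_of_real (deg k) * p x (bv f) k"
    by (rule L0q[OF Pfin[OF x bf]])
  finally show ?thesis by (simp add: algebra_simps)
qed

end



context cpa
begin

abbreviation "P a b \<equiv> p (bv a) (bv b)"
abbreviation "Q a s \<equiv> P (L a) (L 0) (L s)"

lemma commP: "valid eps a \<Longrightarrow> valid eps b \<Longrightarrow> P a b = P b a"
  by (rule comm) (auto intro: bv_SV)

lemma PfinV: "valid eps a \<Longrightarrow> valid eps b \<Longrightarrow> finite {i. P a b i \<noteq> 0}"
  by (rule Pfin) (auto intro: bv_SV)

lemma GLL: "s = c - b \<Longrightarrow> of_int (b - c) * P (L a) (L b) (L c) = Q a s * of_int (2*b - c)"
  using G[of "bv (L a)" "L b" "L c"] ev_LL[OF PfinV[of "L a" "L 0"]] by simp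

lemma GLL': "s = c - a \<Longrightarrow> of_int (a - c) * P (L a) (L b) (L c) = Q b s * of_int (2*a - c)"
  using GLL[of s c a b] commP[of "L a" "L b"] by simp

lemma W2: "j \<noteq> 0 \<Longrightarrow> Q 0 j = 0"
proof -
  assume j: "j \<noteq> 0"
  have e1: "of_int (2*j - 4*j) * P (L j) (L (2*j)) (L (4*j)) = Q j (2*j) * of_int (2*(2*j) - 4*j)"
    by (rule GLL) simp
  have e2: "of_int (j - 4*j) * P (L j) (L (2*j)) (L (4*j)) = Q (2*j) (3*j) * of_int (2*j - 4*j)"
    by (rule GLL') simp
  have e3: "of_int (2*j - 3*j) * P (L (2*j)) (L 0) (L (3*j)) = Q 0 j * of_int (2*(2*j) - 3*j)"
    by (rule GLL') simp
  from e1 j have "P (L j) (L (2*j)) (L (4*j)) = 0" by simp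
  with e2 j have "Q (2*j) (3*j) = 0" by simp
  with e3 j show ?thesis by simp
qed

lemma W3: "s \<noteq> a \<Longrightarrow> Q a s = 0"
proof -
  assume "s \<noteq> a"
  have "of_int (a - s) * P (L a) (L 0) (L s) = Q 0 (s - a) * of_int (2*a - s)"
    by (rule GLL') simp
  with \<open>s \<noteq> a\<close> W2[of "s - a"] show ?thesis by simp
qed

lemma W4rel: "a \<noteq> b \<Longrightarrow> of_int b * Q a a + of_int a * Q b b = 0"
proof -
  assume ab: "a \<noteq> b"
  have e1: "of_int (b - (a+b)) * P (L a) (L b) (L (a+b)) = Q a a * of_int (2*b - (a+b))"
    by (rule GLL) simp
  have e2: "of_int (a - (a+b)) * P (L a) (L b) (L (a+b)) = Q b b * of_int (2*a - (a+b))"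
    by (rule GLL') simp
  define X where "X = P (L a) (L b) (L (a+b))"
  have e1': "- of_int a * X = Q a a * (of_int b - of_int a)" using e1 unfolding X_def by simp
  have e2': "- of_int b * X = Q b b * (of_int a - of_int b)" using e2 unfolding X_def by simp
  have "(of_int b - of_int a) * (of_int b * Q a a + of_int a * Q b b) = (0::complex)"
    using e1' e2' by (simp add: algebra_simps)
  moreover have "(of_int b - of_int a :: complex) \<noteq> 0" using ab by simp
  ultimately show ?thesis by simp
qed

end



context cpa
begin

lemma W4: "a \<noteq> 0 \<Longrightarrow> Q a a = 0"
proof -
  assume False: "a \<noteq> 0"
  have r1: "of_int (2*a) * Q a a + of_int a * Q (2*a) (2*a) = 0" using W4rel[of a "2*a"] False by simp
  have r2: "of_int (3*a) * Q a a + of_int a * Q (3*a) (3*a) = 0" using W4rel[of a "3*a"] False by simp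
  have r3: "of_int (3*a) * Q (2*a) (2*a) + of_int (2*a) * Q (3*a) (3*a) = 0" using W4rel[of "2*a" "3*a"] False by simp
  have a0: "(of_int a :: complex) \<noteq> 0" using False by simp
  have "of_int a * (2 * Q a a + Q (2*a) (2*a)) = 0" using r1 by (simp add: algebra_simps)
  then have t1: "2 * Q a a + Q (2*a) (2*a) = 0" using a0 by simp
  have s1: "Q (2*a) (2*a) = - 2 * Q a a" using t1 by algebra
  have "of_int a * (3 * Q a a + Q (3*a) (3*a)) = 0" using r2 by (simp add: algebra_simps)
  then have t2: "3 * Q a a + Q (3*a) (3*a) = 0" using a0 by simp
  have s2: "Q (3*a) (3*a) = - 3 * Q a a" using t2 by algebra
  have "of_int a * (-12 * Q a a) = 0" using r3 unfolding s1 s2 by (simp add: algebra_simps)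
  then show ?thesis using a0 by simp
qed

lemma W5: "c \<noteq> b \<Longrightarrow> P (L a) (L b) (L c) = 0"
proof -
  assume cb: "c \<noteq> b"
  have e: "of_int (b - c) * P (L a) (L b) (L c) = Q a (c - b) * of_int (2*b - c)"
    by (rule GLL) simp
  have "Q a (c - b) = 0"
  proof (cases "c - b = a")
    case True
    then have "a \<noteq> 0" using cb by simp
    then show ?thesis using W4 True by simp
  next
    case False
    then show ?thesis using W3 by simp
  qed
  with e cb show ?thesis by simp
qed

lemma W5': "c \<noteq> a \<Longrightarrow> P (L a) (L b) (L c) = 0"
  using W5[of c a b] commP[of "L a" "L b"] by simp

lemma W6: "P (L a) (L a) (L a) = 0"
proof -
  define c where "c = \<bar>a\<bar> + 1"
  have c0: "c \<noteq> 0" "c \<noteq> a" unfolding c_def by auto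
  have D: "p (bv (L a)) (sv_bracket (bv (L a)) (bv (L c))) = (\<lambda>i. sv_bracket (P (L a) (L a)) (bv (L c)) i + sv_bracket (bv (L a)) (P (L a) (L c)) i)"
    by (rule Dr) simp_all
  have H: "p (bv (L a)) (sv_bracket (bv (L a)) (bv (L c))) = (\<lambda>i. of_int (a - c) * P (L a) (L (a+c)) i)"
    unfolding bLL by (rule homR) simp_all
  have E: "of_int (a - c) * P (L a) (L (a+c)) (L (a+c)) = sv_bracket (P (L a) (L a)) (bv (L c)) (L (a+c)) + sv_bracket (bv (L a)) (P (L a) (L c)) (L (a+c))"
    using fun_cong[OF trans[OF sym[OF H] D], of "L (a+c)"] by simp
  have z1: "P (L a) (L (a+c)) (L (a+c)) = 0" using W5' c0 by simp
  have z2: "sv_bracket (bv (L a)) (P (L a) (L c)) (L (a+c)) = 0"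
    using ev_LL[OF PfinV[of "L a" "L c"], of a "a+c"] W5'[of c a c] c0 by simp
  have z3: "sv_bracket (P (L a) (L a)) (bv (L c)) (L (a+c)) = - (P (L a) (L a) (L a) * of_int (c - a))"
    using br_anti[of "P (L a) (L a)" "bv (L c)" "L (a+c)"] ev_LL[OF PfinV[of "L a" "L a"], of c "a+c"] by simp
  from E z1 z2 z3 c0 show ?thesis by simp
qed

lemma LL_L: "P (L a) (L b) (L c) = 0"
  using W5[of c b a] W5'[of c a b] W6[of a] by (cases "c = b"; cases "c = a") auto

end



context cpa
begin

lemma cof1[simp]: "(complex_of_int b = complex_of_real k) = (real_of_int b = k)"
  by (metis of_real_eq_iff of_real_of_int_eq)

lemma cof2: "(complex_of_int c = complex_of_int a * 2) = (c = a * 2)"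
  by (metis of_int_eq_iff of_int_mult of_int_numeral)

lemma kill: "X * complex_of_real r = 0 \<Longrightarrow> r \<noteq> 0 \<Longrightarrow> X = 0" by simp

abbreviation "V a s \<equiv> P (L a) (L 0) (Y s)"

lemma GLLY: "s = k - of_int b \<Longrightarrow> complex_of_real (of_int b - k) * P (L a) (L b) (Y k) = V a s * complex_of_real (of_int b / 2 - s)"
  using G[of "bv (L a)" "L b" "Y k"] ev_LY[OF PfinV[of "L a" "L 0"]] by simp

lemma GLLY': "s = k - of_int a \<Longrightarrow> complex_of_real (of_int a - k) * P (L a) (L b) (Y k) = V b s * complex_of_real (of_int a / 2 - s)"
  using GLLY[of s k a b] commP[of "L a" "L b"] by simp

lemma two_j_int:
  assumes "V 0 j \<noteq> 0" shows "\<exists>m::int. of_int m = 2*j"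
proof -
  have "P (L 0) (L 0) \<in> SV eps" by (rule closed) simp_all
  then have "j - eps \<in> \<int>" using SV_Y assms by blast
  then obtain n where n: "j - eps = of_int n" by (auto elim: Ints_cases)
  show ?thesis using eps
  proof
    assume "eps = 0" then show ?thesis using n by (intro exI[of _ "2*n"]) simp
  next
    assume "eps = 1/2" then show ?thesis using n by (intro exI[of _ "2*n+1"]) simp
  qed
qed

lemma YW: "V 0 j = 0"
proof (rule ccontr)
  assume nz0: "V 0 j \<noteq> 0"
  obtain m :: int where m: "of_int m = 2*j" using two_j_int[OF nz0] by blast
  define t :: int where "t = (if j \<ge> 0 then 1 else -1)"
  define b where "b = m + 2*t"
  define k where "k = of_int t + of_int b + j"
  have tj: "of_int t + j \<noteq> 0" unfolding t_def by auto
  have tj2: "of_int t / 2 - (of_int b + j) \<noteq> 0" unfolding b_def t_def using m by auto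
  have bt: "of_int b / 2 - j = of_int t" unfolding b_def using m by (simp add: field_simps)
  have e1: "complex_of_real (of_int b - k) * P (L t) (L b) (Y k) = V t (of_int t + j) * complex_of_real (of_int b / 2 - (of_int t + j))"
    by (rule GLLY) (simp add: k_def)
  have e2: "complex_of_real (of_int t - k) * P (L t) (L b) (Y k) = V b (of_int b + j) * complex_of_real (of_int t / 2 - (of_int b + j))"
    by (rule GLLY') (simp add: k_def)
  have e3: "complex_of_real (of_int b - (of_int b + j)) * P (L b) (L 0) (Y (of_int b + j)) = V 0 j * complex_of_real (of_int b / 2 - j)"
    by (rule GLLY') simp
  have z: "of_int b / 2 - (of_int t + j) = (0::real)" using bt by simp
  have nz: "of_int b - k \<noteq> (0::real)" unfolding k_def using tj by simp
  from e1 have "complex_of_real (of_int b - k) * P (L t) (L b) (Y k) = 0"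
    by (simp only: z of_real_0 mult_zero_right)
  then have "P (L t) (L b) (Y k) = 0" using nz by (simp only: mult_eq_0_iff of_real_eq_0_iff) simp
  with e2 have "V b (of_int b + j) * complex_of_real (of_int t / 2 - (of_int b + j)) = 0"
    by (metis mult_zero_right)
  then have "V b (of_int b + j) = 0" using tj2 by (rule kill)
  with e3 bt have "V 0 j * of_int t = 0" by (metis mult_zero_right of_real_of_int_eq)
  moreover have "t \<noteq> 0" unfolding t_def by simp
  ultimately show False using nz0 by simp
qed

lemma YW3: "s \<noteq> of_int a \<Longrightarrow> V a s = 0"
proof -
  assume "s \<noteq> of_int a"
  have "complex_of_real (of_int a - s) * P (L a) (L 0) (Y s) = V 0 (s - of_int a) * complex_of_real (of_int a / 2 - (s - of_int a))"
    by (rule GLLY') simp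
  with \<open>s \<noteq> of_int a\<close> YW[of "s - of_int a"] show ?thesis by simp
qed

lemma YW4a: "a \<noteq> 0 \<Longrightarrow> V (2*a) (of_int (2*a)) = 0"
proof -
  assume a: "a \<noteq> 0"
  have e1: "complex_of_real (of_int (2*a) - of_int (3*a)) * P (L a) (L (2*a)) (Y (of_int (3*a))) = V a (of_int a) * complex_of_real (of_int (2*a) / 2 - of_int a)"
    by (rule GLLY) simp
  have e2: "complex_of_real (of_int a - of_int (3*a)) * P (L a) (L (2*a)) (Y (of_int (3*a))) = V (2*a) (of_int (2*a)) * complex_of_real (of_int a / 2 - of_int (2*a))"
    by (rule GLLY') simp
  from e1 a have "P (L a) (L (2*a)) (Y (of_int (3*a))) = 0" by simp
  with e2 a show ?thesis by simp
qed

lemma YW4: "V a (of_int a) = 0"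
proof (cases "a = 0")
  case True then show ?thesis using YW[of 0] by simp
next
  case False
  have e1: "complex_of_real (of_int (4*a) - of_int (5*a)) * P (L a) (L (4*a)) (Y (of_int (5*a))) = V a (of_int a) * complex_of_real (of_int (4*a) / 2 - of_int a)"
    by (rule GLLY) simp
  have e2: "complex_of_real (of_int a - of_int (5*a)) * P (L a) (L (4*a)) (Y (of_int (5*a))) = V (4*a) (of_int (4*a)) * complex_of_real (of_int a / 2 - of_int (4*a))"
    by (rule GLLY') simp
  have "V (2*(2*a)) (of_int (2*(2*a))) = 0" using YW4a[of "2*a"] False by simp
  then have "V (4*a) (of_int (4*a)) = 0" by simp
  with e2 False have "P (L a) (L (4*a)) (Y (of_int (5*a))) = 0" by simp
  with e1 False show ?thesis by simp
qed

lemma YW5: "V a s = 0"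
  using YW3[of s a] YW4[of a] by (cases "s = of_int a") auto

lemma YW6: "k \<noteq> of_int b \<Longrightarrow> P (L a) (L b) (Y k) = 0"
proof -
  assume kb: "k \<noteq> of_int b"
  have "complex_of_real (of_int b - k) * P (L a) (L b) (Y k) = V a (k - of_int b) * complex_of_real (of_int b / 2 - (k - of_int b))"
    by (rule GLLY) simp
  with kb YW5 show ?thesis by simp
qed

lemma YW6': "k \<noteq> of_int a \<Longrightarrow> P (L a) (L b) (Y k) = 0"
  using YW6[of k a b] commP[of "L a" "L b"] by simp

lemma YW7: "P (L a) (L a) (Y (of_int a)) = 0"
proof -
  define c where "c = 3 * \<bar>a\<bar> + 1"
  have c0: "c \<noteq> 0" "c \<noteq> a" "of_int c / 2 - of_int a \<noteq> (0::real)" unfolding c_def by auto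
  have D: "p (bv (L a)) (sv_bracket (bv (L a)) (bv (L c))) = (\<lambda>i. sv_bracket (P (L a) (L a)) (bv (L c)) i + sv_bracket (bv (L a)) (P (L a) (L c)) i)"
    by (rule Dr) simp_all
  have H: "p (bv (L a)) (sv_bracket (bv (L a)) (bv (L c))) = (\<lambda>i. of_int (a - c) * P (L a) (L (a+c)) i)"
    unfolding bLL by (rule homR) simp_all
  define k where "k = of_int a + (of_int c :: real)"
  have E: "of_int (a - c) * P (L a) (L (a+c)) (Y k) = sv_bracket (P (L a) (L a)) (bv (L c)) (Y k) + sv_bracket (bv (L a)) (P (L a) (L c)) (Y k)"
    using fun_cong[OF trans[OF sym[OF H] D], of "Y k"] by simp
  have z1: "P (L a) (L (a+c)) (Y k) = 0" using YW6' c0 unfolding k_def by simp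
  have z2: "sv_bracket (bv (L a)) (P (L a) (L c)) (Y k) = 0"
    using ev_LY[OF PfinV[of "L a" "L c"], of a k] YW6'[of "of_int c" a c] c0 unfolding k_def by simp
  have z3: "sv_bracket (P (L a) (L a)) (bv (L c)) (Y k) = - (P (L a) (L a) (Y (of_int a)) * complex_of_real (of_int c / 2 - of_int a))"
    using br_anti[of "P (L a) (L a)" "bv (L c)" "Y k"] ev_LY[OF PfinV[of "L a" "L a"], of c k] unfolding k_def by simp
  have c2: "c \<noteq> a * 2" using c0(3) by (auto simp: field_simps)
  from E z1 z2 z3 c0 c2 show ?thesis by (simp add: cof2)
qed

lemma LL_Y: "P (L a) (L b) (Y k) = 0"
proof (cases "k = of_int b")
  case True
  show ?thesis
  proof (cases "k = of_int a")
    case True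
    then have "a = b" using \<open>k = of_int b\<close> by simp
    then show ?thesis using YW7 True by simp
  next
    case False then show ?thesis by (rule YW6')
  qed
next
  case False then show ?thesis by (rule YW6)
qed

end



lemma half_not_Int: "(1/2::real) \<notin> \<int>"
proof
  assume "(1/2::real) \<in> \<int>"
  then obtain n :: int where "1/2 = (of_int n :: real)" by (auto elim: Ints_cases)
  then have "(1::real) = 2 * of_int n" by simp
  then have "(1::int) = 2 * n" by linarith
  then show False by presburger
qed

lemma cof1'[simp]: "(complex_of_real k = complex_of_int b) = (k = real_of_int b)"
  by (metis of_real_eq_iff of_real_of_int_eq)

context cpa
begin

lemma eps0_of_int: "valid eps (Y j) \<Longrightarrow> j = of_int k \<Longrightarrow> eps = 0"
proof -
  assume v: "valid eps (Y j)" and jk: "j = of_int k"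
  then have "of_int k - eps \<in> \<int>" by simp
  then have "of_int k - (of_int k - eps) \<in> \<int>" by (intro Ints_diff) simp_all
  then have "eps \<in> \<int>" by simp
  then show ?thesis using eps half_not_Int by force
qed

lemma cb: "x \<in> SV eps \<Longrightarrow> eps = 0 \<Longrightarrow> b \<noteq> 0 \<Longrightarrow> p x (bv (Y (of_int b))) (L b) = 0"
proof -
  assume x: "x \<in> SV eps" and e0: "eps = 0" and b0: "b \<noteq> 0"
  have vY: "\<And>m::int. bv (Y (of_int m)) \<in> SV eps" using e0 by (intro bv_SV) simp
  have D: "p x (sv_bracket (bv (L (2*b))) (bv (Y (of_int b)))) = (\<lambda>i. sv_bracket (p x (bv (L (2*b)))) (bv (Y (of_int b))) i + sv_bracket (bv (L (2*b))) (p x (bv (Y (of_int b)))) i)"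
    by (rule Dr[OF x]) (simp_all add: vY)
  have "sv_bracket (bv (L (2*b))) (bv (Y (of_int b))) = (\<lambda>k. 0 * bv (L 0) k)"
    by (simp add: bLY)
  then have H: "p x (sv_bracket (bv (L (2*b))) (bv (Y (of_int b)))) = (\<lambda>k. 0)"
    using homR[OF x bvL, of 0 0] by simp
  have E: "0 = sv_bracket (p x (bv (L (2*b)))) (bv (Y (of_int b))) (L (3*b)) + sv_bracket (bv (L (2*b))) (p x (bv (Y (of_int b)))) (L (3*b))"
    using fun_cong[OF trans[OF sym[OF H] D], of "L (3*b)"] by simp
  have z1: "sv_bracket (p x (bv (L (2*b)))) (bv (Y (of_int b))) (L (3*b)) = 0"
    using br_anti[of "p x (bv (L (2*b)))" "bv (Y (of_int b))" "L (3*b)"] ev_YL by simp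
  have z2: "sv_bracket (bv (L (2*b))) (p x (bv (Y (of_int b)))) (L (3*b)) = p x (bv (Y (of_int b))) (L b) * of_int b"
    using ev_LL[OF Pfin[OF x vY[of b]], of "2*b" "3*b"] by simp
  from E z1 z2 b0 show ?thesis by simp
qed

lemma c0: "x \<in> SV eps \<Longrightarrow> eps = 0 \<Longrightarrow> p x (bv (Y 0)) (L 0) = 0"
proof -
  assume x: "x \<in> SV eps" and e0: "eps = 0"
  have vY: "\<And>m::int. bv (Y (of_int m)) \<in> SV eps" using e0 by (intro bv_SV) simp
  have vYm: "bv (Y (-1)) \<in> SV eps" using vY[of "-1"] by simp
  have vY0: "bv (Y 0) \<in> SV eps" using vY[of "0"] by simp
  have D: "p x (sv_bracket (bv (L 1)) (bv (Y (-1)))) = (\<lambda>i. sv_bracket (p x (bv (L 1))) (bv (Y (-1))) i + sv_bracket (bv (L 1)) (p x (bv (Y (-1)))) i)"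
    by (rule Dr[OF x]) (simp_all add: vYm)
  have "sv_bracket (bv (L 1)) (bv (Y (-1))) = (\<lambda>k. complex_of_real (3/2) * bv (Y 0) k)"
    by (simp add: bLY)
  then have H: "p x (sv_bracket (bv (L 1)) (bv (Y (-1)))) = (\<lambda>k. complex_of_real (3/2) * p x (bv (Y 0)) k)"
    using homR[OF x vY0, of "complex_of_real (3/2)"] by simp
  have E: "complex_of_real (3/2) * p x (bv (Y 0)) (L 0) = sv_bracket (p x (bv (L 1))) (bv (Y (-1))) (L 0) + sv_bracket (bv (L 1)) (p x (bv (Y (-1)))) (L 0)"
    using fun_cong[OF trans[OF sym[OF H] D], of "L 0"] by simp
  have z1: "sv_bracket (p x (bv (L 1))) (bv (Y (-1))) (L 0) = 0"
    using br_anti[of "p x (bv (L 1))" "bv (Y (-1))" "L 0"] ev_YL by simp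
  have cm: "p x (bv (Y (-1))) (L (-1)) = 0" using cb[OF x e0, of "-1"] by simp
  have z2: "sv_bracket (bv (L 1)) (p x (bv (Y (-1)))) (L 0) = 0"
    using ev_LL[OF Pfin[OF x vYm], of 1 0] cm by simp
  from E z1 z2 show ?thesis by simp
qed

lemma A1: "x \<in> SV eps \<Longrightarrow> valid eps (Y j) \<Longrightarrow> p x (bv (Y j)) (L k) = 0"
proof -
  assume x: "x \<in> SV eps" and v: "valid eps (Y j)"
  show ?thesis
  proof (cases "j = of_int k")
    case False
    have "complex_of_real (deg (Y j) - deg (L k)) * p x (bv (Y j)) (L k) = sv_bracket (bv (Y j)) (p x (bv (L 0))) (L k)"
      by (rule G[OF x v])
    then show ?thesis using False ev_YL by simp
  next
    case True
    have e0: "eps = 0" using eps0_of_int[OF v True] .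
    show ?thesis
    proof (cases "k = 0")
      case True then show ?thesis using c0[OF x e0] \<open>j = of_int k\<close> by simp
    next
      case False then show ?thesis using cb[OF x e0 False] \<open>j = of_int k\<close> by simp
    qed
  qed
qed

lemma Mdecomp:
  assumes x: "x \<in> SV eps"
  shows "\<exists>i j. valid eps (Y i) \<and> valid eps (Y j) \<and> i - j \<noteq> 0 \<and>
     (\<forall>k. complex_of_real (i - j) * p x (bv (M n)) k = sv_bracket (p x (bv (Y i))) (bv (Y j)) k + sv_bracket (bv (Y i)) (p x (bv (Y j))) k)"
proof -
  define m :: int where "m = (if n \<ge> 0 then n + 1 else n - 1)"
  define i where "i = eps + of_int m"
  define j where "j = of_int n - i"
  have e2: "2 * eps \<in> \<int>"
  proof (cases "eps = 0")
    case True then show ?thesis by simp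
  next
    case False then have "eps = 1/2" using eps by simp
    then have "2 * eps = of_int 1" by simp
    then show ?thesis by (metis Ints_of_int)
  qed
  have vi: "valid eps (Y i)" unfolding i_def by simp
  have vj: "valid eps (Y j)"
  proof -
    have h: "j - eps = of_int (n - m) - 2 * eps" unfolding j_def i_def by simp
    have "j - eps \<in> \<int>" unfolding h using e2 by (intro Ints_diff) simp_all
    then show ?thesis by simp
  qed
  have ij: "i - j \<noteq> 0" unfolding i_def j_def m_def using eps by auto
  have D: "p x (sv_bracket (bv (Y i)) (bv (Y j))) = (\<lambda>k. sv_bracket (p x (bv (Y i))) (bv (Y j)) k + sv_bracket (bv (Y i)) (p x (bv (Y j))) k)"
    by (rule Dr[OF x]) (simp_all add: bv_SV[OF vi] bv_SV[OF vj])
  have "sv_bracket (bv (Y i)) (bv (Y j)) = (\<lambda>k. complex_of_real (i - j) * bv (M n) k)"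
    by (rule bYY) (simp add: j_def)
  then have H: "p x (sv_bracket (bv (Y i)) (bv (Y j))) = (\<lambda>k. complex_of_real (i - j) * p x (bv (M n)) k)"
    using homR[OF x bvM] by simp
  show ?thesis
    using vi vj ij trans[OF sym[OF H] D] by (intro exI[of _ i] exI[of _ j]) (auto simp: fun_eq_iff)
qed

lemma A2: "x \<in> SV eps \<Longrightarrow> p x (bv (M n)) (L k) = 0 \<and> p x (bv (M n)) (Y s) = 0"
proof -
  assume x: "x \<in> SV eps"
  obtain i j where vi: "valid eps (Y i)" and vj: "valid eps (Y j)" and ij: "i - j \<noteq> 0" and
    E: "\<And>k. complex_of_real (i - j) * p x (bv (M n)) k = sv_bracket (p x (bv (Y i))) (bv (Y j)) k + sv_bracket (bv (Y i)) (p x (bv (Y j))) k"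
    using Mdecomp[OF x, of n] by blast
  have nL: "\<forall>i'. p x (bv (Y i)) (L i') = 0" "\<forall>i'. p x (bv (Y j)) (L i') = 0"
    using A1[OF x vi] A1[OF x vj] by auto
  have "complex_of_real (i - j) * p x (bv (M n)) (L k) = 0"
    using E[of "L k"] br_anti[of "p x (bv (Y i))" "bv (Y j)" "L k"] ev_YL by simp
  moreover have "complex_of_real (i - j) * p x (bv (M n)) (Y s) = 0"
    using E[of "Y s"] br_anti[of "p x (bv (Y i))" "bv (Y j)" "Y s"] ev_Y_noL[OF nL(1)] ev_Y_noL[OF nL(2)] by simp
  ultimately show ?thesis using ij by simp
qed

lemma NoL: "valid eps a \<Longrightarrow> valid eps b \<Longrightarrow> P a b (L k) = 0"
proof -
  assume va: "valid eps a" and vb: "valid eps b"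
  have xa: "bv a \<in> SV eps" and xb: "bv b \<in> SV eps" using va vb by (auto intro: bv_SV)
  show ?thesis
  proof (cases b)
    case (L n)
    show ?thesis
    proof (cases a)
      case (L m) then show ?thesis using \<open>b = L n\<close> LL_L by simp
    next
      case (Y m)
      then have "P b a (L k) = 0" using A1[OF xb] va by simp
      then show ?thesis by (subst commP[OF va vb])
    next
      case (M m)
      then have "P b a (L k) = 0" using A2[OF xb] by simp
      then show ?thesis by (subst commP[OF va vb])
    qed
  next
    case (Y n) then show ?thesis using A1[OF xa] vb by simp
  next
    case (M n) then show ?thesis using A2[OF xa] by simp
  qed
qed

end



context cpa
begin

lemma alg1: "(c::complex) * A = B * c \<Longrightarrow> c * (A - B) = 0" by (simp add: algebra_simps)
lemma alg2: "complex_of_real r * (A - B) = 0 \<Longrightarrow> r \<noteq> 0 \<Longrightarrow> A = B" by simp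

lemma vYshift: "valid eps (Y b) \<Longrightarrow> valid eps (Y (of_int a + b))"
proof -
  assume "valid eps (Y b)"
  then have "b - eps \<in> \<int>" by simp
  then have "of_int a + (b - eps) \<in> \<int>" by (intro Ints_add) simp_all
  then show ?thesis by (simp add: algebra_simps)
qed

lemma NoYoff: "valid eps x \<Longrightarrow> valid eps (Y j) \<Longrightarrow> k \<noteq> j \<Longrightarrow> P x (Y j) (Y k) = 0"
proof -
  assume vx: "valid eps x" and vj: "valid eps (Y j)" and kj: "k \<noteq> j"
  have "complex_of_real (deg (Y j) - deg (Y k)) * P x (Y j) (Y k) = sv_bracket (bv (Y j)) (P x (L 0)) (Y k)"
    by (rule G[OF bv_SV[OF vx] vj])
  moreover have "\<forall>i. P x (L 0) (L i) = 0" using NoL[OF vx] by simp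
  ultimately show ?thesis using kj ev_Y_noL by simp
qed

lemma yrel: "valid eps x \<Longrightarrow> valid eps (Y b) \<Longrightarrow>
   complex_of_real (of_int a/2 - b) * (P x (Y (of_int a + b)) (Y (of_int a + b)) - P x (Y b) (Y b)) = 0"
proof -
  assume vx: "valid eps x" and vb: "valid eps (Y b)"
  have X: "bv x \<in> SV eps" using bv_SV[OF vx] .
  have Yb: "bv (Y b) \<in> SV eps" using bv_SV[OF vb] .
  have Yab: "bv (Y (of_int a + b)) \<in> SV eps" using bv_SV[OF vYshift[OF vb]] .
  define k where "k = Y (of_int a + b)"
  have D: "p (bv x) (sv_bracket (bv (L a)) (bv (Y b))) = (\<lambda>i. sv_bracket (P x (L a)) (bv (Y b)) i + sv_bracket (bv (L a)) (P x (Y b)) i)"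
    by (rule Dr[OF X bvL Yb])
  have H: "p (bv x) (sv_bracket (bv (L a)) (bv (Y b))) = (\<lambda>i. complex_of_real (of_int a/2 - b) * P x (Y (of_int a + b)) i)"
    unfolding bLY by (rule homR[OF X Yab])
  have E: "complex_of_real (of_int a/2 - b) * P x (Y (of_int a + b)) k = sv_bracket (P x (L a)) (bv (Y b)) k + sv_bracket (bv (L a)) (P x (Y b)) k"
    using fun_cong[OF trans[OF sym[OF H] D], of k] by simp
  have nL: "\<forall>i. P x (L a) (L i) = 0" using NoL[OF vx] by simp
  have z1: "sv_bracket (P x (L a)) (bv (Y b)) k = 0"
    using br_anti[of "P x (L a)" "bv (Y b)" k] ev_Y_noL[OF nL] unfolding k_def by simp
  have z2: "sv_bracket (bv (L a)) (P x (Y b)) k = P x (Y b) (Y b) * complex_of_real (of_int a/2 - b)"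
    using ev_LY[OF Pfin[OF X Yb], of a "of_int a + b"] unfolding k_def by simp
  have "complex_of_real (of_int a/2 - b) * P x (Y (of_int a + b)) k = P x (Y b) (Y b) * complex_of_real (of_int a/2 - b)"
    using E z1 z2 by (metis add.left_neutral)
  then show ?thesis unfolding k_def by (rule alg1)
qed

lemma yshift: "valid eps x \<Longrightarrow> valid eps (Y j) \<Longrightarrow>
  \<exists>a::int. a \<noteq> 0 \<and> valid eps (Y (of_int a + j)) \<and> P x (Y (of_int a + j)) (Y (of_int a + j)) = P x (Y j) (Y j)"
proof -
  assume vx: "valid eps x" and vj: "valid eps (Y j)"
  define a :: int where "a = (if j = 1/2 then 2 else 1)"
  have a0: "of_int a / 2 - j \<noteq> 0" unfolding a_def by auto
  have "complex_of_real (of_int a/2 - j) * (P x (Y (of_int a + j)) (Y (of_int a + j)) - P x (Y j) (Y j)) = 0"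
    by (rule yrel[OF vx vj])
  then have "P x (Y (of_int a + j)) (Y (of_int a + j)) = P x (Y j) (Y j)" using a0 by (rule alg2)
  moreover have "a \<noteq> 0" unfolding a_def by simp
  ultimately show ?thesis using vYshift[OF vj, of a] by blast
qed

lemma NoY_Y: "valid eps (Y i) \<Longrightarrow> valid eps (Y j) \<Longrightarrow> P (Y i) (Y j) (Y k) = 0"
proof -
  assume vi: "valid eps (Y i)" and vj: "valid eps (Y j)"
  have off: "\<And>i j. valid eps (Y i) \<Longrightarrow> valid eps (Y j) \<Longrightarrow> j \<noteq> i \<Longrightarrow> P (Y i) (Y j) (Y j) = 0"
  proof -
    fix i j assume vi: "valid eps (Y i)" and vj: "valid eps (Y j)" and ji: "j \<noteq> i"
    have "P (Y j) (Y i) (Y j) = 0" by (rule NoYoff[OF vj vi ji])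
    then show "P (Y i) (Y j) (Y j) = 0" by (subst commP[OF vi vj])
  qed
  show ?thesis
  proof (cases "k = j")
    case False then show ?thesis using NoYoff[OF vi vj] by simp
  next
    case True
    show ?thesis
    proof (cases "j = i")
      case False then show ?thesis using off[OF vi vj] \<open>k = j\<close> by simp
    next
      case True
      obtain a :: int where a: "a \<noteq> 0" "valid eps (Y (of_int a + i))"
        "P (Y i) (Y (of_int a + i)) (Y (of_int a + i)) = P (Y i) (Y i) (Y i)"
        using yshift[OF vi vi] by blast
      have "P (Y i) (Y (of_int a + i)) (Y (of_int a + i)) = 0" using off[OF vi a(2)] a(1) by simp
      then show ?thesis using a(3) \<open>k = j\<close> \<open>j = i\<close> by simp
    qed
  qed
qed

lemma NoY_L0: "valid eps (Y j) \<Longrightarrow> P (L 0) (Y j) (Y j) = 0"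
proof -
  assume vj: "valid eps (Y j)"
  define c :: int where "c = (if j = 1/2 then 2 else 1)"
  have c0: "c \<noteq> 0" "of_int c / 2 - j \<noteq> 0" unfolding c_def by auto
  have e: "complex_of_real (deg (L c) - deg (Y (j + of_int c))) * P (Y j) (L c) (Y (j + of_int c))
      = sv_bracket (bv (L c)) (P (Y j) (L 0)) (Y (j + of_int c))"
    by (rule G[OF bv_SV[OF vj]]) simp
  have "P (L c) (Y j) (Y (j + of_int c)) = 0" using NoYoff[of "L c" j "j + of_int c"] vj c0 by simp
  then have z: "P (Y j) (L c) (Y (j + of_int c)) = 0" using commP[of "Y j" "L c"] vj by simp
  have "sv_bracket (bv (L c)) (P (Y j) (L 0)) (Y (j + of_int c)) = P (Y j) (L 0) (Y j) * complex_of_real (of_int c / 2 - j)"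
    using ev_LY[OF PfinV[of "Y j" "L 0"], of c "j + of_int c"] vj by simp
  with e z have "P (Y j) (L 0) (Y j) * complex_of_real (of_int c / 2 - j) = 0" by (metis mult_zero_right)
  then have "P (Y j) (L 0) (Y j) = 0" using c0(2) by (rule kill)
  then show ?thesis using commP[of "Y j" "L 0"] vj by simp
qed

lemma NoY_Lc_off: "valid eps (Y j) \<Longrightarrow> of_int c \<noteq> j \<Longrightarrow> P (L c) (Y j) (Y j) = 0"
proof -
  assume vj: "valid eps (Y j)" and cj: "of_int c \<noteq> j"
  have e: "complex_of_real (deg (L c) - deg (Y j)) * P (Y j) (L c) (Y j)
      = sv_bracket (bv (L c)) (P (Y j) (L 0)) (Y j)"
    by (rule G[OF bv_SV[OF vj]]) simp
  have "P (L 0) (Y j) (Y (j - of_int c)) = 0"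
  proof (cases "c = 0")
    case True then show ?thesis using NoY_L0[OF vj] by simp
  next
    case False then show ?thesis using NoYoff[of "L 0" j "j - of_int c"] vj by simp
  qed
  then have z: "P (Y j) (L 0) (Y (j - of_int c)) = 0" using commP[of "Y j" "L 0"] vj by simp
  have "sv_bracket (bv (L c)) (P (Y j) (L 0)) (Y j) = 0"
    using ev_LY[OF PfinV[of "Y j" "L 0"], of c j] vj z by simp
  with e have "complex_of_real (of_int c - j) * P (Y j) (L c) (Y j) = 0" by simp
  then have "P (Y j) (L c) (Y j) = 0" using cj by simp
  then show ?thesis using commP[of "Y j" "L c"] vj by simp
qed

lemma NoY_L: "valid eps (Y j) \<Longrightarrow> P (L c) (Y j) (Y k) = 0"
proof -
  assume vj: "valid eps (Y j)"
  show ?thesis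
  proof (cases "k = j")
    case False then show ?thesis using NoYoff[of "L c" j k] vj by simp
  next
    case True
    show ?thesis
    proof (cases "of_int c = j")
      case False then show ?thesis using NoY_Lc_off[OF vj] True by simp
    next
      case True
      obtain a :: int where a: "a \<noteq> 0" "valid eps (Y (of_int a + j))"
        "P (L c) (Y (of_int a + j)) (Y (of_int a + j)) = P (L c) (Y j) (Y j)"
        using yshift[OF _ vj, of "L c"] by auto
      have "of_int c \<noteq> of_int a + j" using True a(1) by simp
      then have "P (L c) (Y (of_int a + j)) (Y (of_int a + j)) = 0" using NoY_Lc_off[OF a(2)] by simp
      then show ?thesis using a(3) \<open>k = j\<close> by simp
    qed
  qed
qed

lemma NoYall: "valid eps a \<Longrightarrow> valid eps b \<Longrightarrow> P a b (Y k) = 0"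
proof -
  assume va: "valid eps a" and vb: "valid eps b"
  have xa: "bv a \<in> SV eps" and xb: "bv b \<in> SV eps" using va vb by (auto intro: bv_SV)
  have Yc: "\<And>x j. valid eps x \<Longrightarrow> valid eps (Y j) \<Longrightarrow> P x (Y j) (Y k) = 0"
  proof -
    fix x j assume vx: "valid eps x" and vj: "valid eps (Y j)"
    show "P x (Y j) (Y k) = 0"
    proof (cases x)
      case (L c) then show ?thesis using NoY_L[OF vj] by simp
    next
      case (Y i) then show ?thesis using NoY_Y[OF _ vj] vx by simp
    next
      case (M n)
      have "P (Y j) (M n) (Y k) = 0" using A2[OF bv_SV[OF vj]] by simp
      then show ?thesis using commP[of "Y j" "M n"] vj M by simp
    qed
  qed
  show ?thesis
  proof (cases b)
    case (L n)
    show ?thesis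
    proof (cases a)
      case (L m) then show ?thesis using \<open>b = L n\<close> LL_Y by simp
    next
      case (Y m)
      then have "P b a (Y k) = 0" using Yc[OF vb] va by simp
      then show ?thesis by (subst commP[OF va vb])
    next
      case (M m)
      then have "P b a (Y k) = 0" using A2[OF xb] by simp
      then show ?thesis by (subst commP[OF va vb])
    qed
  next
    case (Y n) then show ?thesis using Yc[OF va] vb by simp
  next
    case (M n) then show ?thesis using A2[OF xa] by simp
  qed
qed

lemma BM: "valid eps x \<Longrightarrow> P x (M n) = (\<lambda>_. 0)"
proof
  fix k
  assume vx: "valid eps x"
  have X: "bv x \<in> SV eps" using bv_SV[OF vx] .
  obtain i j where vi: "valid eps (Y i)" and vj: "valid eps (Y j)" and ij: "i - j \<noteq> 0" and
    E: "\<And>k. complex_of_real (i - j) * P x (M n) k = sv_bracket (P x (Y i)) (bv (Y j)) k + sv_bracket (bv (Y i)) (P x (Y j)) k"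
    using Mdecomp[OF X, of n] by blast
  show "P x (M n) k = 0"
  proof (cases k)
    case (L s) then show ?thesis using NoL[OF vx] by simp
  next
    case (Y s) then show ?thesis using NoYall[OF vx] by simp
  next
    case (M s)
    have nLi: "\<forall>t. P x (Y i) (L t) = 0" "\<forall>t. P x (Y i) (Y t) = 0"
      using NoL[OF vx vi] NoYall[OF vx vi] by auto
    have nLj: "\<forall>t. P x (Y j) (L t) = 0" "\<forall>t. P x (Y j) (Y t) = 0"
      using NoL[OF vx vj] NoYall[OF vx vj] by auto
    have "complex_of_real (i - j) * P x (M n) k = 0"
      using E[of k] br_anti[of "P x (Y i)" "bv (Y j)" k] ev_Y_onlyM[OF nLi] ev_Y_onlyM[OF nLj] by simp
    then show ?thesis using ij by simp
  qed
qed

end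



lemma sum_bv: "finite S \<Longrightarrow> (\<Sum>k\<in>S. c k * bv k i) = (if i \<in> S then c i else 0)"
proof -
  assume fS: "finite S"
  have "(\<Sum>k\<in>S. c k * bv k i) = (\<Sum>k\<in>S. if i = k then c k else 0)"
    by (rule sum.cong) (auto simp: bv_def)
  also have "\<dots> = (if i \<in> S then c i else 0)" using fS by (simp add: sum.delta)
  finally show ?thesis .
qed

context cpa
begin

lemma scale_SV: "y \<in> SV eps \<Longrightarrow> (\<lambda>i. c * y i) \<in> SV eps"
proof -
  assume y: "y \<in> SV eps"
  have "{i. c * y i \<noteq> 0} \<subseteq> {i. y i \<noteq> 0}" by auto
  then have "finite {i. c * y i \<noteq> 0}" using SV_fin[OF y] finite_subset by blast
  then show ?thesis using y unfolding SV_def by auto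
qed

lemma sumSV: "finite S \<Longrightarrow> \<forall>k\<in>S. valid eps k \<Longrightarrow> (\<lambda>i. \<Sum>k\<in>S. c k * bv k i) \<in> SV eps"
proof -
  assume fS: "finite S" and vS: "\<forall>k\<in>S. valid eps k"
  have eq: "(\<lambda>i. \<Sum>k\<in>S. c k * bv k i) = (\<lambda>i. if i \<in> S then c i else 0)"
    using sum_bv[OF fS] by auto
  have "{i. (if i \<in> S then c i else 0) \<noteq> 0} \<subseteq> S" by auto
  then have "finite {i. (if i \<in> S then c i else 0) \<noteq> 0}" using fS finite_subset by blast
  moreover have "\<forall>j. (if Y j \<in> S then c (Y j) else 0) \<noteq> 0 \<longrightarrow> j - eps \<in> \<int>"
    using vS by (auto split: if_splits)
  ultimately show ?thesis unfolding eq SV_def by simp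
qed

lemma linR:
  assumes x: "x \<in> SV eps" and fS: "finite S" and vS: "\<forall>k\<in>S. valid eps k"
  shows "p x (\<lambda>i. \<Sum>k\<in>S. c k * bv k i) = (\<lambda>i. \<Sum>k\<in>S. c k * p x (bv k) i)"
  using fS vS
proof (induction S rule: finite_induct)
  case empty
  have "p x (\<lambda>i. 0 * bv (L 0) i) = (\<lambda>i. 0 * p x (bv (L 0)) i)" by (rule homR[OF x bvL])
  then show ?case by simp
next
  case (insert k S)
  have vk: "valid eps k" using insert by simp
  have u: "(\<lambda>i. c k * bv k i) \<in> SV eps" by (rule scale_SV[OF bv_SV[OF vk]])
  have w: "(\<lambda>i. \<Sum>k\<in>S. c k * bv k i) \<in> SV eps" using insert by (intro sumSV) auto
  have "p x (\<lambda>i. \<Sum>k\<in>insert k S. c k * bv k i) = p x (\<lambda>i. c k * bv k i + (\<Sum>k\<in>S. c k * bv k i))"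
    using insert by simp
  also have "\<dots> = (\<lambda>i. p x (\<lambda>i. c k * bv k i) i + p x (\<lambda>i. \<Sum>k\<in>S. c k * bv k i) i)"
    by (rule addR[OF x u w])
  also have "\<dots> = (\<lambda>i. c k * p x (bv k) i + (\<Sum>k\<in>S. c k * p x (bv k) i))"
    using homR[OF x bv_SV[OF vk], of "c k"] insert by simp
  also have "\<dots> = (\<lambda>i. \<Sum>k\<in>insert k S. c k * p x (bv k) i)" using insert by simp
  finally show ?case .
qed

lemma supp_valid: "v \<in> SV eps \<Longrightarrow> v k \<noteq> 0 \<Longrightarrow> valid eps k"
  by (cases k) (auto dest: SV_Y)

lemma prodR: "x \<in> SV eps \<Longrightarrow> v \<in> SV eps \<Longrightarrow> p x v = (\<lambda>i. \<Sum>k\<in>{k. v k \<noteq> 0}. v k * p x (bv k) i)"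
proof -
  assume x: "x \<in> SV eps" and v: "v \<in> SV eps"
  have fS: "finite {k. v k \<noteq> 0}" using SV_fin[OF v] .
  have "v = (\<lambda>i. \<Sum>k\<in>{k. v k \<noteq> 0}. v k * bv k i)"
    using sum_bv[OF fS, of v] by auto
  then have "p x v = p x (\<lambda>i. \<Sum>k\<in>{k. v k \<noteq> 0}. v k * bv k i)" by simp
  also have "\<dots> = (\<lambda>i. \<Sum>k\<in>{k. v k \<noteq> 0}. v k * p x (bv k) i)"
    using fS supp_valid[OF v] by (intro linR[OF x]) auto
  finally show ?thesis .
qed

lemma killA: "valid eps a \<Longrightarrow> valid eps b \<Longrightarrow> valid eps z \<Longrightarrow> p (bv a) (P b z) = (\<lambda>_. 0)"
proof -
  assume va: "valid eps a" and vb: "valid eps b" and vz: "valid eps z"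
  have v: "P b z \<in> SV eps" by (rule closed) (auto intro: bv_SV vb vz)
  have "p (bv a) (P b z) = (\<lambda>i. \<Sum>k\<in>{k. P b z k \<noteq> 0}. P b z k * P a k i)"
    by (rule prodR[OF bv_SV[OF va] v])
  also have "\<dots> = (\<lambda>i. 0)"
  proof (rule ext, rule sum.neutral, rule ballI)
    fix i k assume "k \<in> {k. P b z k \<noteq> 0}"
    then have nz: "P b z k \<noteq> 0" by simp
    show "P b z k * P a k i = 0"
    proof (cases k)
      case (L n) then show ?thesis using nz NoL[OF vb vz] by simp
    next
      case (Y n) then show ?thesis using nz NoYall[OF vb vz] by simp
    next
      case (M n) then show ?thesis using BM[OF va] by simp
    qed
  qed
  finally show ?thesis .
qed

lemma brrep: "valid eps e \<Longrightarrow> \<exists>a b c. valid eps a \<and> valid eps b \<and> c \<noteq> 0 \<and> sv_bracket (bv a) (bv b) = (\<lambda>k. c * bv e k)"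
proof (cases e)
  case (L n)
  show ?thesis
  proof (cases "n = 0")
    case True then show ?thesis using L
      by (intro exI[of _ "L 1"] exI[of _ "L (-1)"] exI[of _ "2"]) (simp add: bLL)
  next
    case False then show ?thesis using L
      by (intro exI[of _ "L 0"] exI[of _ "L n"] exI[of _ "of_int (-n)"]) (simp add: bLL)
  qed
next
  case (Y j)
  assume ve: "valid eps e"
  show ?thesis
  proof (cases "j = 0")
    case True
    then have "eps = 0" using eps0_of_int[of j 0] ve Y by simp
    then have vm: "valid eps (Y (-1))" by simp
    show ?thesis using True Y vm
      by (intro exI[of _ "L 1"] exI[of _ "Y (-1)"] exI[of _ "complex_of_real (3/2)"]) (simp add: bLY)
  next
    case False then show ?thesis using Y ve
      by (intro exI[of _ "L 0"] exI[of _ "Y j"] exI[of _ "complex_of_real (-j)"]) (simp add: bLY)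
  qed
next
  case (M n)
  show ?thesis
  proof (cases "n = 0")
    case True then show ?thesis using M
      by (intro exI[of _ "L 1"] exI[of _ "M (-1)"] exI[of _ "1"]) (simp add: bLM)
  next
    case False then show ?thesis using M
      by (intro exI[of _ "L 0"] exI[of _ "M n"] exI[of _ "of_int (-n)"]) (simp add: bLM)
  qed
qed

lemma Pzero: "valid eps e \<Longrightarrow> valid eps z \<Longrightarrow> P e z = (\<lambda>_. 0)"
proof -
  assume ve: "valid eps e" and vz: "valid eps z"
  obtain a b c where va: "valid eps a" and vb: "valid eps b" and c: "c \<noteq> 0"
    and br: "sv_bracket (bv a) (bv b) = (\<lambda>k. c * bv e k)"
    using brrep[OF ve] by blast
  have "p (sv_bracket (bv a) (bv b)) (bv z) = (\<lambda>i. p (bv a) (P b z) i - p (bv b) (P a z) i)"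
    by (rule Hm) (auto intro: bv_SV va vb vz)
  also have "\<dots> = (\<lambda>_. 0)" using killA[OF va vb vz] killA[OF vb va vz] by simp
  finally have "p (\<lambda>k. c * bv e k) (bv z) = (\<lambda>_. 0)" unfolding br .
  moreover have "p (\<lambda>k. c * bv e k) (bv z) = (\<lambda>i. c * P e z i)"
    by (rule homL) (auto intro: bv_SV ve vz)
  ultimately show ?thesis using c by (auto simp: fun_eq_iff)
qed

lemma main: "x \<in> SV eps \<Longrightarrow> y \<in> SV eps \<Longrightarrow> p x y = (\<lambda>_. 0)"
proof -
  assume x: "x \<in> SV eps" and y: "y \<in> SV eps"
  have pk: "p x (bv k) = (\<lambda>_. 0)" if vk: "valid eps k" for k
  proof -
    have "p x (bv k) = p (bv k) x" by (rule comm[OF x bv_SV[OF vk]])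
    also have "\<dots> = (\<lambda>i. \<Sum>l\<in>{l. x l \<noteq> 0}. x l * P k l i)" by (rule prodR[OF bv_SV[OF vk] x])
    also have "\<dots> = (\<lambda>_. 0)" using Pzero[OF vk supp_valid[OF x]] by simp
    finally show ?thesis .
  qed
  have "p x y = (\<lambda>i. \<Sum>k\<in>{k. y k \<noteq> 0}. y k * p x (bv k) i)" by (rule prodR[OF x y])
  also have "\<dots> = (\<lambda>_. 0)" using pk supp_valid[OF y] by simp
  finally show ?thesis .
qed

end



theorem theorem4p3:
  fixes eps :: real
    and p :: "(sv_idx \<Rightarrow> complex) \<Rightarrow> (sv_idx \<Rightarrow> complex) \<Rightarrow> (sv_idx \<Rightarrow> complex)"
  assumes "eps = 0 \<or> eps = 1/2"
    and "comm_post_lie_SV eps p"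
  shows "\<forall>x\<in>SV eps. \<forall>y\<in>SV eps. p x y = (\<lambda>_. 0)"
proof -
  interpret cpa eps p using assms by unfold_locales
  show ?thesis using main by blast
qed

end
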